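(* For every $x\in(0,1)$, $$\Gamma(x,1-x)\ \le\ \Gamma(x)\Gamma(1-x)=\frac{\pi}{\sin(\pi x)}.$$
   Context: For $x>0,y>0$ the Bigamma function is the (convergent) improper integral $\Gamma(x,y):=\int_0^1(-\ln t)^{x-1}\big(-\ln(1-t)\big)^{y-1}\,dt$. $\Gamma(x)$ (one argument) denotes Euler's gamma function. *)

theory Defs
  imports "HOL-Analysis.Analysis"
begin

definition bigamma_integrand :: "real \<Rightarrow> real \<Rightarrow> real \<Rightarrow> real" where
  "bigamma_integrand x y t = (- ln t) powr (x - 1) * (- ln (1 - t)) powr (y - 1)"

text \<open>Bigamma function: the (improper) integral over (0,1). The integrand is
  nonnegative, so the improper integral coincides with the (absolutely convergent)
  integral over the open interval.\<close>
definition Bigamma :: "real \<Rightarrow> real \<Rightarrow> real" where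
  "Bigamma x y = integral {0<..<1} (bigamma_integrand x y)"

end

theory Submission
  imports Defs
begin

lemma refl_real:
  fixes x :: real
  shows "Gamma x * Gamma (1 - x) = pi / sin (pi * x)"
proof -
  have "complex_of_real (Gamma x * Gamma (1 - x)) = complex_of_real (pi / sin (pi * x))"
  proof -
    have e: "Gamma (1 - complex_of_real x) = complex_of_real (Gamma (1 - x))"
      using Gamma_complex_of_real[of "1 - x"] by simp
    have s: "sin (complex_of_real pi * complex_of_real x) = complex_of_real (sin (pi * x))"
      using sin_of_real[of "pi * x"] by simp
    show ?thesis
      using Gamma_reflection_complex[of "complex_of_real x"] unfolding e s
      by (simp add: Gamma_complex_of_real)
  qed
  thus ?thesis by (simp only: of_real_eq_iff)
qed

theorem mainTheorem10:
  fixes x :: real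
  assumes "0 < x" and "x < 1"
  shows "bigamma_integrand x (1 - x) integrable_on {0<..<1}
    \<and> Bigamma x (1 - x) \<le> Gamma x * Gamma (1 - x)
    \<and> Gamma x * Gamma (1 - x) = pi / sin (pi * x)"
proof -
  define g where "g = (\<lambda>t::real. t powr ((1 - x) - 1) * (1 - t) powr (x - 1))"
  have hB: "(g has_integral Beta (1 - x) x) {0<..<1}"
    using has_integral_Beta_real[of "1 - x" x] assms
    by (simp add: has_integral_Icc_iff_Ioo g_def)
  have BG: "Beta (1 - x) x = Gamma x * Gamma (1 - x)"
    by (simp add: Beta_def)
  have bound: "bigamma_integrand x (1 - x) t \<le> g t" if t: "t \<in> {0<..<1}" for t
  proof -
    have t0: "0 < t" "t < 1" using t by auto
    have l1: "1 - t \<le> - ln t" using ln_le_minus_one[of t] t0 by linarith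
    have l2: "t \<le> - ln (1 - t)" using ln_le_minus_one[of "1 - t"] t0 by linarith
    have a: "(- ln t) powr (x - 1) \<le> (1 - t) powr (x - 1)"
      by (rule powr_mono2') (use assms t0 l1 in auto)
    have b: "(- ln (1 - t)) powr ((1 - x) - 1) \<le> t powr ((1 - x) - 1)"
      by (rule powr_mono2') (use assms t0 l2 in auto)
    have "bigamma_integrand x (1 - x) t
        = (- ln t) powr (x - 1) * (- ln (1 - t)) powr ((1 - x) - 1)"
      by (simp add: bigamma_integrand_def)
    also have "\<dots> \<le> (1 - t) powr (x - 1) * t powr ((1 - x) - 1)"
      by (intro mult_mono a b) auto
    finally show ?thesis by (simp add: g_def mult.commute del: diff_diff_eq)
  qed
  have nonneg: "0 \<le> bigamma_integrand x (1 - x) t" for t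
    by (simp add: bigamma_integrand_def)
  have cont: "continuous_on {0<..<1} (bigamma_integrand x (1 - x))"
    unfolding bigamma_integrand_def
    by (intro continuous_intros) auto
  have meas: "bigamma_integrand x (1 - x) \<in> borel_measurable (lebesgue_on {0<..<1})"
    by (rule continuous_imp_measurable_on_sets_lebesgue[OF cont]) auto
  have int: "bigamma_integrand x (1 - x) integrable_on {0<..<1}"
    by (rule measurable_bounded_by_integrable_imp_integrable[OF meas hB[THEN has_integral_integrable]])
       (use bound nonneg in auto)
  have le: "Bigamma x (1 - x) \<le> Gamma x * Gamma (1 - x)"
    unfolding Bigamma_def BG[symmetric]
    using integral_le[OF int hB[THEN has_integral_integrable] bound] hB
    by (simp add: integral_unique)
  show ?thesis using int le refl_real by blast
qed

end
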